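(* Under the standing assumptions, $\rho+\mathcal V=j_k\mathsf n^k$; equivalently $e_k(B)-e_k(\tilde D)=\mathsf n^{\mathsf T}\gamma\,W\,\mathsf n$. Moreover $U\mathsf n=\tilde U\tilde{\mathsf n}$ and $\mathsf n^{\mathsf T}\gamma W\mathsf n=\lambda^2\,\tilde{\mathsf n}^{\mathsf T}\varphi\tilde U\tilde{\mathsf n}$.
   Context: Let $s\ge1$. For a square matrix $X$, $e_k(X)$ are the elementary symmetric polynomials defined by $\det(I+tX)=\sum_k e_k(X)t^k$ ($e_k=0$ for $k<0$); $Y_k(X):=\sum_{i=0}^{k}(-1)^{k+i}e_i(X)X^{k-i}$ for $k\ge0$ and $Y_{-1}(X):=0$. Standing assumptions: $e,m$ are invertible real $s\times s$ matrices, $v\in\mathbb R^s$ with $v^{\mathsf T}v<1$, $\lambda:=(1-v^{\mathsf T}v)^{-1/2}$, $\hat\Lambda:=(I-vv^{\mathsf T})^{-1/2}$, and $e^{\mathsf T}\hat\Lambda m$ is symmetric. Define $\gamma=e^{\mathsf T}e$, $\varphi=m^{\mathsf T}m$, $\mathsf n=e^{-1}v$, $\tilde{\mathsf n}=m^{-1}v$, $\tilde D=e^{-1}\hat\Lambda^{-1}m$, $B=e^{-1}\hat\Lambda m$. Fix an integer $k$ and set $U=\lambda^{-1}Y_{k-1}(B)$, $\tilde U=\tilde D\,Y_{k-1}(\tilde D)$, $W=B\,Y_{k-1}(\tilde D)$, $\mathcal V=e_k(\tilde D)$, $\rho=-e_k(B)$, $j=-\gamma W\mathsf n$. *)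

theory Defs
  imports "HOL-Analysis.Analysis" "HOL-Computational_Algebra.Polynomial"
begin

primrec mpow :: "real^'n^'n \<Rightarrow> nat \<Rightarrow> real^'n^'n" where
  "mpow X 0 = mat 1"
| "mpow X (Suc n) = X ** mpow X n"

definition esym :: "int \<Rightarrow> real^'n^'n \<Rightarrow> real" where
  "esym k X = (if k < 0 then 0 else
     coeff (det (\<chi> i j. (if i = j then 1 else 0) + [:0, X $ i $ j:] :: real poly^'n^'n)) (nat k))"

definition Ymat :: "int \<Rightarrow> real^'n^'n \<Rightarrow> real^'n^'n" where
  "Ymat k X = (if k < 0 then 0 else
     (\<Sum>i = 0..nat k. ((-1) ^ (nat k + i) * esym (int i) X) *\<^sub>R mpow X (nat k - i)))"

definition outer :: "real^'n \<Rightarrow> real^'n \<Rightarrow> real^'n^'n" where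
  "outer u w = (\<chi> i j. u $ i * w $ j)"

definition pos_def_mat :: "real^'n^'n \<Rightarrow> bool" where
  "pos_def_mat S \<longleftrightarrow> (\<forall>x. x \<noteq> 0 \<longrightarrow> x \<bullet> (S *v x) > 0)"

definition inv_sqrt_mat :: "real^'n^'n \<Rightarrow> real^'n^'n" where
  "inv_sqrt_mat A = (THE S. transpose S = S \<and> pos_def_mat S \<and> S ** S = matrix_inv A)"

end

theory Submission
  imports Defs "HOL-Computational_Algebra.Polynomial_FPS"
begin


lemma det_hom:
  fixes h :: "'a::comm_ring_1 \<Rightarrow> 'b::comm_ring_1" and A :: "'a^'n^'n"
  assumes add: "\<And>x y. h (x+y) = h x + h y" and mul: "\<And>x y. h(x*y) = h x * h y"
    and one: "h 1 = 1"
  shows "h (det A) = det (\<chi> i j. h (A$i$j))"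
proof -
  have z: "h 0 = 0" using add[of 0 0] by simp
  have neg: "h (- x) = - h x" for x using minus_unique[of "h x" "h(-x)"] add[of x "-x"] z by simp
  have oi: "h (of_int (sign p)) = of_int (sign p)" for p :: "'n \<Rightarrow> 'n"
    by (cases "sign p = 1") (auto simp: sign_def one neg)
  have hs: "h (sum f S) = sum (\<lambda>x. h (f x)) S" for f :: "('n\<Rightarrow>'n) \<Rightarrow> 'a" and S
    by (induction S rule: infinite_finite_induct) (auto simp: z add)
  have hp: "h (prod f S) = prod (\<lambda>x. h (f x)) S" for f :: "'n \<Rightarrow> 'a" and S
    by (induction S rule: infinite_finite_induct) (auto simp: one mul)
  show ?thesis unfolding det_def hs mul hp oi by simp
qed

definition gouter :: "'a::comm_ring_1^'n \<Rightarrow> 'a^'n \<Rightarrow> 'a^'n^'n" where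
  "gouter u w = (\<chi> i j. u $ i * w $ j)"

lemma perm_fix_all_but_one:
  assumes "p permutes (UNIV::'n set)" "\<forall>i. i \<noteq> k \<longrightarrow> p i = i"
  shows "p = id"
proof
  fix x show "p x = id x"
  proof (cases "x = k")
    case True
    show ?thesis
    proof (rule ccontr)
      assume "p x \<noteq> id x"
      then have "p k \<noteq> k" using True by simp
      then have "p (p k) = p k" using assms(2) by blast
      then have "p k = k" using assms(1) by (metis permutes_inj injD)
      with \<open>p k \<noteq> k\<close> show False by simp
    qed
  qed (use assms in auto)
qed

lemma det_row_replace_id:
  fixes y :: "'a::comm_ring_1^'n"
  shows "det (\<chi> i. if i = k then y else axis i 1) = y $ k"
proof -
  let ?Z = "(\<chi> i. if i = k then y else axis i 1) :: 'a^'n^'n"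
  have "det ?Z = (\<Sum>p\<in>{p. p permutes UNIV}. of_int (sign p) * (\<Prod>i\<in>UNIV. ?Z $ i $ p i))"
    by (simp add: det_def)
  also have "\<dots> = (\<Sum>p\<in>{id}. of_int (sign p) * (\<Prod>i\<in>UNIV. ?Z $ i $ p i))"
  proof (rule sum.mono_neutral_right)
    show "finite {p. p permutes (UNIV::'n set)}" by (simp add: finite_permutations)
    show "{id} \<subseteq> {p. p permutes (UNIV::'n set)}" by (auto simp: permutes_id)
    show "\<forall>p\<in>{p. p permutes UNIV} - {id}. of_int (sign p) * (\<Prod>i\<in>UNIV. ?Z $ i $ p i) = 0"
    proof
      fix p :: "'n \<Rightarrow> 'n" assume p: "p \<in> {p. p permutes UNIV} - {id}"
      then obtain i where "i \<noteq> k" "p i \<noteq> i" using perm_fix_all_but_one[of p k] by auto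
      then have "?Z $ i $ p i = 0" by (simp add: axis_def)
      then have "\<exists>a\<in>UNIV. ?Z $ a $ p a = 0" by blast
      then have "(\<Prod>i\<in>UNIV. ?Z $ i $ p i) = 0" by (rule prod_zero[OF finite])
      then show "of_int (sign p) * (\<Prod>i\<in>UNIV. ?Z $ i $ p i) = 0" by simp
    qed
  qed
  also have "\<dots> = (\<Prod>i\<in>UNIV. ?Z $ i $ i)" by (simp add: sign_id)
  also have "\<dots> = (\<Prod>i\<in>UNIV. if i = k then y $ k else 1)"
    by (rule prod.cong) (auto simp: axis_def)
  also have "\<dots> = y $ k" by (simp add: prod.delta)
  finally show ?thesis .
qed

lemma det_H:
  fixes x y :: "'a::comm_ring_1^'n"
  assumes "finite S" "k \<notin> S"
  shows "det (\<chi> i. if i = k then y else if i \<in> S then axis i 1 + x$i *s y else axis i 1) = y $ k"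
  using assms
proof (induction S rule: finite_induct)
  case empty
  have "(\<chi> i. if i = k then y else if i \<in> {} then axis i 1 + x$i *s y else axis i 1)
      = (\<chi> i. if i = k then y else axis i 1 :: 'a^'n^'n)"
    by (intro arg_cong[where f=vec_lambda] ext) auto
  then show ?case using det_row_replace_id by metis
next
  case (insert j S)
  have jk: "j \<noteq> k" using insert by auto
  define c where "c = (\<lambda>i. if i = k then y else if i \<in> S then axis i 1 + x$i *s y else axis i 1)"
  have eq: "(\<chi> i. if i = k then y else if i \<in> insert j S then axis i 1 + x$i *s y else axis i 1)
     = (\<chi> i. if i = j then axis i 1 + x$i *s y else c i)"
    by (intro arg_cong[where f=vec_lambda] ext) (use jk in \<open>auto simp: c_def\<close>)
  have e1: "(\<chi> i. if i = j then axis i 1 else c i) =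
       (\<chi> i. if i = k then y else if i \<in> S then axis i 1 + x$i *s y else axis i 1)"
    by (intro arg_cong[where f=vec_lambda] ext) (use jk insert(2) in \<open>auto simp: c_def\<close>)
  have e2: "det (\<chi> i. if i = j then y else c i) = 0"
    by (rule det_identical_rows[OF jk]) (simp add: row_def c_def vec_eq_iff jk)
  have e3: "(\<chi> i. if i = j then x$i *s y else c i) = (\<chi> i. if i = j then x$j *s y else c i)"
    by (intro arg_cong[where f=vec_lambda] ext) auto
  show ?case
    unfolding eq det_row_add[of j "\<lambda>i. axis i 1" "\<lambda>i. x$i *s y" c] e3
    using det_row_mul[of j "x$j" "\<lambda>i. y" c] e1 e2 insert by simp
qed

lemma det_G:
  fixes x y :: "'a::comm_ring_1^'n"
  assumes "finite S"
  shows "det (\<chi> i. if i \<in> S then axis i 1 + x$i *s y else axis i 1) = 1 + (\<Sum>i\<in>S. x$i * y$i)"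
  using assms
proof (induction S rule: finite_induct)
  case empty
  have "(\<chi> i. if i \<in> {} then axis i 1 + x$i *s y else axis i 1) = (mat 1 :: 'a^'n^'n)"
    by (simp add: vec_eq_iff axis_def mat_def)
  then show ?case by simp
next
  case (insert k S)
  define c where "c = (\<lambda>i. if i \<in> S then axis i 1 + x$i *s y else axis i 1)"
  have eq: "(\<chi> i. if i \<in> insert k S then axis i 1 + x$i *s y else axis i 1)
     = (\<chi> i. if i = k then axis i 1 + x$i *s y else c i)"
    by (intro arg_cong[where f=vec_lambda] ext) (auto simp: c_def)
  have e1: "(\<chi> i. if i = k then axis i 1 else c i) =
       (\<chi> i. if i \<in> S then axis i 1 + x$i *s y else axis i 1)"
    by (intro arg_cong[where f=vec_lambda] ext) (use insert(2) in \<open>auto simp: c_def\<close>)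
  have e2: "det (\<chi> i. if i = k then y else c i) = y $ k"
    unfolding c_def using det_H[OF insert(1,2), of y x] by simp
  have e3: "(\<chi> i. if i = k then x$i *s y else c i) = (\<chi> i. if i = k then x$k *s y else c i)"
    by (intro arg_cong[where f=vec_lambda] ext) auto
  show ?case
    unfolding eq det_row_add[of k "\<lambda>i. axis i 1" "\<lambda>i. x$i *s y" c] e3
    using det_row_mul[of k "x$k" "\<lambda>i. y" c] e1 e2 insert by (simp add: algebra_simps)
qed

lemma det_I_outer:
  fixes x y :: "'a::comm_ring_1^'n"
  shows "det (mat 1 + gouter x y) = 1 + (\<Sum>i\<in>UNIV. x$i * y$i)"
proof -
  have "mat 1 + gouter x y = (\<chi> i. if i \<in> UNIV then axis i 1 + x$i *s y else axis i 1)"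
    by (simp add: vec_eq_iff axis_def mat_def gouter_def)
  then show ?thesis using det_G[of UNIV x y] by simp
qed



lemma mm_sum_right: "(A::real^'n^'n) ** sum f S = sum (\<lambda>x. A ** f x) S"
  by (induction S rule: infinite_finite_induct) (auto simp: matrix_add_ldistrib)

lemma mm_sum_left: "sum f S ** (A::real^'n^'n) = sum (\<lambda>x. f x ** A) S"
  by (induction S rule: infinite_finite_induct)
     (auto simp: matrix_matrix_mult_def vec_eq_iff sum.distrib distrib_right)

lemma mm_scale_right: "(A::real^'n^'n) ** (c *\<^sub>R B) = c *\<^sub>R (A ** B)"
  by (simp add: matrix_scalar_ac scalar_matrix_assoc)

lemma mm_scale_left: "(c *\<^sub>R B) ** (A::real^'n^'n) = c *\<^sub>R (B ** A)"
  by (simp add: scalar_matrix_assoc)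

lemma mpow_comm: "A ** mpow A k = mpow A k ** A"
  by (induction k) (simp_all add: matrix_mul_assoc)

lemma Ymat_neg: "k < 0 \<Longrightarrow> Ymat k A = 0"
  by (simp add: Ymat_def)

lemma Ymat_nat: "Ymat (int k) A = (\<Sum>i = 0..k. ((-1) ^ (k + i) * esym (int i) A) *\<^sub>R mpow A (k - i))"
  by (simp add: Ymat_def)

lemma Ymat_comm: "A ** Ymat k A = Ymat k A ** A"
proof (cases "k < 0")
  case True then show ?thesis by (simp add: Ymat_neg)
next
  case False
  then obtain n where k: "k = int n" by (metis nonneg_int_cases not_less)
  show ?thesis unfolding k Ymat_nat mm_sum_right mm_sum_left mm_scale_right mm_scale_left mpow_comm ..
qed

lemma Ymat_0: "Ymat 0 A = esym 0 A *\<^sub>R mat 1"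
  using Ymat_nat[of 0 A] by simp

lemma Ymat_rec: "Ymat (int (Suc k)) A = esym (int (Suc k)) A *\<^sub>R mat 1 - A ** Ymat (int k) A"
proof -
  let ?f = "\<lambda>i. ((-1) ^ (Suc k + i) * esym (int i) A) *\<^sub>R mpow A (Suc k - i)"
  have last: "?f (Suc k) = esym (int (Suc k)) A *\<^sub>R mat 1"
    by (simp add: power_add[symmetric] mult_2[symmetric])
  have rest: "(\<Sum>i = 0..k. ?f i) = - (A ** Ymat (int k) A)"
    unfolding Ymat_nat mm_sum_right sum_negf[symmetric]
  proof (rule sum.cong)
    fix i assume "i \<in> {0..k}"
    then have "Suc k - i = Suc (k - i)" by auto
    then show "?f i = - (A ** (((-1) ^ (k + i) * esym (int i) A) *\<^sub>R mpow A (k - i)))"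
      by (simp add: mm_scale_right)
  qed simp
  show ?thesis unfolding Ymat_nat[of "Suc k"] sum.atLeast0_atMost_Suc rest last by simp
qed

definition FM :: "real^'n^'n \<Rightarrow> real fps^'n^'n" where
  "FM A = (\<chi> i j. (if i = j then 1 else 0) + fps_X * fps_const (A$i$j))"

definition dF :: "real^'n^'n \<Rightarrow> real fps" where "dF A = det (FM A)"

definition YS :: "real^'n^'n \<Rightarrow> real fps^'n^'n" where
  "YS A = (\<chi> i j. Abs_fps (\<lambda>k. Ymat (int k) A $ i $ j))"

lemma dF_nth: fixes A :: "real^'n^'n" shows "fps_nth (dF A) k = esym (int k) A"
proof -
  have h: "fps_of_poly (det (\<chi> i j. (if i = j then 1 else 0) + [:0, A $ i $ j:] :: real poly^'n^'n))
     = det (\<chi> i j. fps_of_poly ((\<chi> i j. (if i = j then 1 else 0) + [:0, A $ i $ j:] :: real poly^'n^'n) $ i $ j))"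
    by (rule det_hom) (simp_all add: fps_of_poly_add fps_of_poly_mult)
  have "(\<chi> i j. fps_of_poly ((\<chi> i j. (if i = j then 1 else 0) + [:0, A $ i $ j:] :: real poly^'n^'n) $ i $ j)) = FM A"
    by (simp add: FM_def vec_eq_iff fps_of_poly_add fps_of_poly_pCons fps_of_poly_const mult.commute)
  then have "dF A = fps_of_poly (det (\<chi> i j. (if i = j then 1 else 0) + [:0, A $ i $ j:] :: real poly^'n^'n))"
    using h by (simp add: dF_def)
  then show ?thesis by (simp add: esym_def)
qed

lemma dF_0: fixes A :: "real^'n^'n" shows "fps_nth (dF A) 0 = 1"
proof -
  have "fps_nth (dF A) 0 = det (\<chi> i j. fps_nth (FM A $ i $ j) 0)"
    unfolding dF_def by (rule det_hom) simp_all
  also have "(\<chi> i j. fps_nth (FM A $ i $ j) 0) = (mat 1 :: real^'n^'n)"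
    by (simp add: FM_def vec_eq_iff mat_def)
  finally show ?thesis by simp
qed

lemma esym_0: "esym 0 A = 1" using dF_0[of A] dF_nth[of A 0] by simp

lemma entryL: "fps_nth (((if i = l then 1 else 0) + fps_X * fps_const a) * (f::real fps)) n
   = (if i = l then fps_nth f n else 0) + (if n = 0 then 0 else a * fps_nth f (n-1))"
  by (simp add: distrib_right mult.assoc)

lemma entryR: "fps_nth ((f::real fps) * ((if i = l then 1 else 0) + fps_X * fps_const a)) n
   = (if i = l then fps_nth f n else 0) + (if n = 0 then 0 else a * fps_nth f (n-1))"
  by (simp add: mult.commute[of f] entryL)

lemma Y_coeff_eq: "Ymat (int n) A $ i $ j + (if n = 0 then 0 else (A ** Ymat (int (n-1)) A) $ i $ j)
   = (if i = j then esym (int n) A else 0)"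
proof (cases n)
  case 0 then show ?thesis by (simp add: Ymat_0 mat_def)
next
  case (Suc m) then show ?thesis using Ymat_rec[of m A] by (simp add: mat_def)
qed

lemma FM_YS: "FM A ** YS A = (\<chi> i j. if i = j then dF A else 0)"
proof -
  have "fps_nth ((FM A ** YS A) $ i $ j) n = fps_nth (if i = j then dF A else 0) n" for i j n
  proof -
    have "fps_nth ((FM A ** YS A) $ i $ j) n = (\<Sum>l\<in>UNIV. (if i = l then Ymat (int n) A $ l $ j else 0)
           + (if n = 0 then 0 else A $ i $ l * Ymat (int (n-1)) A $ l $ j))"
      by (simp add: matrix_matrix_mult_def fps_sum_nth FM_def YS_def entryL fps_nth_Abs_fps cong: if_cong)
    also have "\<dots> = Ymat (int n) A $ i $ j + (if n = 0 then 0 else (A ** Ymat (int (n-1)) A) $ i $ j)"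
      by (simp add: sum.distrib matrix_matrix_mult_def)
    also have "\<dots> = fps_nth (if i = j then dF A else 0) n" by (simp add: Y_coeff_eq dF_nth)
    finally show ?thesis .
  qed
  then show ?thesis by (simp add: vec_eq_iff fps_eq_iff)
qed

lemma YS_FM: "YS A ** FM A = (\<chi> i j. if i = j then dF A else 0)"
proof -
  have "fps_nth ((YS A ** FM A) $ i $ j) n = fps_nth (if i = j then dF A else 0) n" for i j n
  proof -
    have "fps_nth ((YS A ** FM A) $ i $ j) n = (\<Sum>l\<in>UNIV. (if l = j then Ymat (int n) A $ i $ l else 0)
           + (if n = 0 then 0 else Ymat (int (n-1)) A $ i $ l * A $ l $ j))"
      by (simp add: matrix_matrix_mult_def fps_sum_nth FM_def YS_def entryR fps_nth_Abs_fps mult.commute cong: if_cong)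
    also have "\<dots> = Ymat (int n) A $ i $ j + (if n = 0 then 0 else (Ymat (int (n-1)) A ** A) $ i $ j)"
      by (simp add: sum.distrib matrix_matrix_mult_def)
    also have "\<dots> = Ymat (int n) A $ i $ j + (if n = 0 then 0 else (A ** Ymat (int (n-1)) A) $ i $ j)"
      by (simp only: Ymat_comm)
    also have "\<dots> = fps_nth (if i = j then dF A else 0) n" by (simp add: Y_coeff_eq dF_nth)
    finally show ?thesis .
  qed
  then show ?thesis by (simp add: vec_eq_iff fps_eq_iff)
qed



definition cv :: "real^'n \<Rightarrow> real fps^'n" where "cv u = (\<chi> i. fps_const (u$i))"

lemma FM_outer_entry: "(c::real fps) + fps_X * fps_const (a + p * q)
   = (c + fps_X * fps_const a) + fps_X * fps_const p * fps_const q"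
proof -
  have "fps_const (a + p * q) = fps_const a + fps_const p * fps_const q"
    by (simp only: fps_const_add fps_const_mult)
  then show ?thesis by (simp only: distrib_left add.assoc mult.assoc)
qed

lemma FM_outer: "FM (A + outer u w) = FM A + gouter (fps_X *s cv u) (cv w)"
  unfolding FM_def gouter_def outer_def cv_def vec_eq_iff
  by (simp only: vector_add_component vec_lambda_beta vector_smult_component FM_outer_entry) (simp add: mult.assoc)

lemma mm_gouter: "(M::'a::comm_ring_1^'n^'n) ** gouter p q = gouter (M *v p) q"
  by (simp add: matrix_matrix_mult_def gouter_def matrix_vector_mult_def vec_eq_iff
      sum_distrib_right mult.assoc)

lemma gouter_mv: "gouter p q *v (z::'a::comm_ring_1^'n) = (\<Sum>i\<in>UNIV. q$i * z$i) *s p"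
  by (simp add: gouter_def matrix_vector_mult_def vec_eq_iff sum_distrib_left mult_ac)

lemma diag_mv: "(\<chi> i j. if i = j then d else 0) *v (x::'a::comm_ring_1^'n) = d *s x"
  by (simp add: matrix_vector_mult_def vec_eq_iff if_distrib if_distribR cong: if_cong)

lemma dF_nz: "dF A \<noteq> 0"
  using dF_0[of A] by auto

lemma inv_dF: "inverse (dF A) * dF A = 1"
  by (rule inverse_mult_eq_1) (simp add: dF_0)

lemma YSv_nth: "fps_nth ((YS A *v cv u) $ i) k = (Ymat (int k) A *v u) $ i"
  by (simp add: matrix_vector_mult_def YS_def cv_def fps_sum_nth)

lemma eqB:
  fixes A :: "real^'n^'n"
  shows "dF (A + outer u w) = dF A + fps_X * (\<Sum>i\<in>UNIV. (YS A *v cv u) $ i * fps_const (w$i))"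
proof -
  let ?d = "dF A" let ?M = "FM A" let ?Y = "YS A"
  define Minv where "Minv = (\<chi> i j. inverse ?d * ?Y $ i $ j)"
  define xu where "xu = fps_X *s cv u"
  have MM: "?M ** Minv = mat 1"
  proof -
    have "?M ** Minv = (\<chi> i j. inverse ?d * (?M ** ?Y) $ i $ j)"
      by (simp add: Minv_def matrix_matrix_mult_def vec_eq_iff sum_distrib_left mult_ac)
    also have "\<dots> = mat 1" unfolding FM_YS
      by (simp add: vec_eq_iff mat_def inv_dF)
    finally show ?thesis .
  qed
  have fac: "FM (A + outer u w) = ?M ** (mat 1 + gouter (Minv *v xu) (cv w))"
    unfolding FM_outer matrix_add_ldistrib mm_gouter matrix_vector_mul_assoc MM xu_def by simp
  have Mx: "Minv *v xu = (inverse ?d * fps_X) *s (?Y *v cv u)"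
    by (simp add: Minv_def xu_def matrix_vector_mult_def vec_eq_iff sum_distrib_left mult_ac)
  have "dF (A + outer u w) = ?d * (1 + (\<Sum>i\<in>UNIV. (Minv *v xu) $ i * cv w $ i))"
    unfolding dF_def fac det_mul det_I_outer ..
  also have "\<dots> = ?d * (1 + (inverse ?d * fps_X) * (\<Sum>i\<in>UNIV. (?Y *v cv u) $ i * fps_const (w$i)))"
    unfolding Mx by (simp add: cv_def sum_distrib_left mult_ac)
  also have "\<dots> = ?d + (inverse ?d * ?d) * fps_X * (\<Sum>i\<in>UNIV. (?Y *v cv u) $ i * fps_const (w$i))"
    by (simp add: algebra_simps)
  also have "\<dots> = ?d + fps_X * (\<Sum>i\<in>UNIV. (?Y *v cv u) $ i * fps_const (w$i))"
    by (simp add: inv_dF)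
  finally show ?thesis .
qed

lemma esym_rank1_Suc:
  fixes A :: "real^'n^'n"
  shows "esym (int (Suc k)) (A + outer u w) = esym (int (Suc k)) A + w \<bullet> (Ymat (int k) A *v u)"
proof -
  have "fps_nth (dF (A + outer u w)) (Suc k) = fps_nth (dF A) (Suc k)
      + fps_nth (\<Sum>i\<in>UNIV. (YS A *v cv u) $ i * fps_const (w$i)) k"
    unfolding eqB by simp
  also have "fps_nth (\<Sum>i\<in>UNIV. (YS A *v cv u) $ i * fps_const (w$i)) k = w \<bullet> (Ymat (int k) A *v u)"
    by (simp add: fps_sum_nth YSv_nth inner_vec_def mult.commute)
  finally show ?thesis by (simp add: dF_nth)
qed

lemma esym_neg: "k < 0 \<Longrightarrow> esym k A = 0" by (simp add: esym_def)

lemma esym_rank1: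
  fixes A :: "real^'n^'n"
  shows "esym k (A + outer u w) = esym k A + w \<bullet> (Ymat (k - 1) A *v u)"
proof (cases "k \<le> 0")
  case True
  have Y: "Ymat (k - 1) A = 0" using True by (simp add: Ymat_neg)
  show ?thesis
  proof (cases "k = 0")
    case True
    then show ?thesis using Y by (simp add: esym_0)
  next
    case False
    then have "k < 0" using \<open>k \<le> 0\<close> by simp
    then show ?thesis using Y by (simp add: esym_neg)
  qed
next
  case False
  define m where "m = nat (k - 1)"
  have "k = int (Suc m)" using False by (simp add: m_def)
  then show ?thesis using esym_rank1_Suc[of m A u w] by simp
qed

lemma Y_rank1_fps:
  fixes A :: "real^'n^'n"
  shows "YS (A + outer u w) *v cv u = YS A *v cv u"
proof -
  let ?A' = "A + outer u w"
  let ?z = "YS A *v cv u" let ?z' = "YS ?A' *v cv u"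
  let ?M' = "FM ?A'"
  let ?T = "\<Sum>i\<in>UNIV. ?z $ i * fps_const (w$i)"
  have "?M' *v ?z = FM A *v ?z + gouter (fps_X *s cv u) (cv w) *v ?z"
    unfolding FM_outer by (simp add: matrix_vector_mult_add_rdistrib)
  also have "FM A *v ?z = dF A *s cv u"
    by (simp add: matrix_vector_mul_assoc FM_YS diag_mv)
  also have "gouter (fps_X *s cv u) (cv w) *v ?z = (fps_X * ?T) *s cv u"
    by (simp add: gouter_mv cv_def mult_ac vector_smult_assoc)
  also have "dF A *s cv u + (fps_X * ?T) *s cv u = dF ?A' *s cv u"
    by (simp add: eqB vector_sadd_rdistrib)
  finally have e1: "?M' *v ?z = dF ?A' *s cv u" .
  have e2: "?M' *v ?z' = dF ?A' *s cv u"
    by (simp add: matrix_vector_mul_assoc FM_YS diag_mv)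
  have "?M' *v (?z - ?z') = 0" using e1 e2 by (simp add: matrix_vector_mult_diff_distrib)
  then have "YS ?A' *v (?M' *v (?z - ?z')) = 0" by simp
  then have "dF ?A' *s (?z - ?z') = 0" by (simp add: matrix_vector_mul_assoc YS_FM diag_mv)
  then have "?z - ?z' = 0" using dF_nz[of ?A'] by (simp only: vector_mul_eq_0) blast
  then show ?thesis by simp
qed

lemma Y_rank1:
  fixes A :: "real^'n^'n"
  shows "Ymat k (A + outer u w) *v u = Ymat k A *v u"
proof (cases "k < 0")
  case True then show ?thesis by (simp add: Ymat_neg)
next
  case False
  then obtain n where k: "k = int n" by (metis nonneg_int_cases not_less)
  have "fps_nth ((YS (A + outer u w) *v cv u) $ i) n = fps_nth ((YS A *v cv u) $ i) n" for i
    using Y_rank1_fps[of A u w] by simp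
  then show ?thesis unfolding k YSv_nth by (simp add: vec_eq_iff)
qed



lemma outer_mv: "outer p q *v x = (q \<bullet> x) *\<^sub>R p"
  by (simp add: outer_def matrix_vector_mult_def inner_vec_def vec_eq_iff sum_distrib_left mult_ac)

lemma smat_mv: "(a *\<^sub>R (M::real^'n^'n)) *v x = a *\<^sub>R (M *v x)"
  by (simp add: scaleR_matrix_vector_assoc)

lemma IPmv: "(mat 1 + a *\<^sub>R outer v v) *v x = x + (a * (v \<bullet> x)) *\<^sub>R v"
  by (simp add: matrix_vector_mult_add_rdistrib smat_mv outer_mv)

lemma IP_mult: "(mat 1 + a *\<^sub>R outer v v) ** (mat 1 + b *\<^sub>R outer v v)
   = mat 1 + (a + b + a * b * (v \<bullet> v)) *\<^sub>R outer v v"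
  unfolding matrix_eq
proof
  fix x
  show "((mat 1 + a *\<^sub>R outer v v) ** (mat 1 + b *\<^sub>R outer v v)) *v x
     = (mat 1 + (a + b + a * b * (v \<bullet> v)) *\<^sub>R outer v v) *v x"
    unfolding matrix_vector_mul_assoc[symmetric] IPmv
    by (simp add: inner_add_right algebra_simps)
qed

lemma IP_minus: "mat 1 - outer v v = mat 1 + (-1) *\<^sub>R outer v v" by simp

lemma matrix_inv_eq:
  fixes A B :: "real^'n^'n"
  assumes "A ** B = mat 1" "B ** A = mat 1"
  shows "matrix_inv A = B"
proof -
  have "A ** matrix_inv A = mat 1 \<and> matrix_inv A ** A = mat 1"
    unfolding matrix_inv_def by (rule someI[of _ B]) (use assms in auto)
  then have "matrix_inv A = matrix_inv A ** (A ** B)" using assms by simp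
  also have "\<dots> = B" by (simp add: matrix_mul_assoc \<open>_ \<and> _\<close>)
  finally show ?thesis .
qed

lemma matrix_inv_props:
  fixes A :: "real^'n^'n"
  assumes "invertible A"
  shows "A ** matrix_inv A = mat 1" "matrix_inv A ** A = mat 1"
  using assms unfolding invertible_def matrix_inv_def by (metis (mono_tags, lifting) someI_ex)+

definition lamv :: "real^'n \<Rightarrow> real" where "lamv v = 1 / sqrt (1 - v \<bullet> v)"
definition cL :: "real^'n \<Rightarrow> real" where "cL v = (if v \<bullet> v = 0 then 0 else (lamv v - 1) / (v \<bullet> v))"
definition dL :: "real^'n \<Rightarrow> real" where "dL v = (if v \<bullet> v = 0 then 0 else (1 / lamv v - 1) / (v \<bullet> v))"

lemma lam_facts:
  assumes "v \<bullet> v < 1"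
  shows "lamv v > 0" "lamv v ^ 2 * (1 - v \<bullet> v) = 1" "lamv v \<ge> 1"
    "lamv v ^ 2 = 1 + lamv v ^ 2 * (v \<bullet> v)"
proof -
  have p: "1 - v \<bullet> v > 0" using assms by simp
  show "lamv v > 0" using p by (simp add: lamv_def)
  show sq: "lamv v ^ 2 * (1 - v \<bullet> v) = 1" using p
    by (simp add: lamv_def power_divide)
  then show "lamv v ^ 2 = 1 + lamv v ^ 2 * (v \<bullet> v)" by (simp add: algebra_simps)
  have "sqrt (1 - v \<bullet> v) \<le> 1" using p by (simp add: real_sqrt_le_1_iff)
  then show "lamv v \<ge> 1" using p by (simp add: lamv_def)
qed

lemma cL_s: "v \<bullet> v * cL v = lamv v - 1" if "v \<bullet> v \<noteq> 0" using that by (simp add: cL_def)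
lemma dL_s: "v \<bullet> v * dL v = 1 / lamv v - 1" if "v \<bullet> v \<noteq> 0" using that by (simp add: dL_def)

lemma L0_sq:
  assumes "v \<bullet> v < 1"
  shows "(mat 1 + cL v *\<^sub>R outer v v) ** (mat 1 + cL v *\<^sub>R outer v v)
        = mat 1 + (lamv v)^2 *\<^sub>R outer v v"
proof (cases "v \<bullet> v = 0")
  case True
  then have "v = 0" by simp
  then have "outer v v = 0" by (simp add: outer_def vec_eq_iff)
  then show ?thesis by simp
next
  case False
  note lf = lam_facts[OF assms]
  have "cL v + cL v + cL v * cL v * (v \<bullet> v) = (lamv v)^2"
  proof -
    have "(cL v + cL v + cL v * cL v * (v \<bullet> v)) * (v \<bullet> v)
        = 2 * (v \<bullet> v * cL v) + (v \<bullet> v * cL v) * (v \<bullet> v * cL v)"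
      by (simp add: algebra_simps)
    also have "\<dots> = (lamv v - 1) * (lamv v + 1)" unfolding cL_s[OF False]
      by (simp add: algebra_simps)
    also have "\<dots> = (lamv v)^2 - 1" by (simp add: algebra_simps power2_eq_square)
    also have "\<dots> = (lamv v)^2 * (v \<bullet> v)" using lf(4) by linarith
    finally show ?thesis using False by simp
  qed
  then show ?thesis by (simp add: IP_mult)
qed

lemma sym_mv: "transpose S = S \<Longrightarrow> (S *v x) \<bullet> y = x \<bullet> ((S::real^'n^'n) *v y)"
  by (metis dot_lmul_matrix transpose_matrix_vector)

lemma Smv_lin: "(S::real^'n^'n) *v (a + b) = S *v a + S *v b" "S *v (a - b) = S *v a - S *v b"
  "S *v (c *\<^sub>R a) = c *\<^sub>R (S *v a)"
  by (simp_all add: matrix_vector_right_distrib matrix_vector_mult_diff_distrib matrix_vector_mult_scaleR)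

lemma uniq_sqrt:
  fixes S :: "real^'n^'n"
  assumes s1: "v \<bullet> v < 1" and sym: "transpose S = S" and pd: "pos_def_mat S"
    and sq: "S ** S = mat 1 + (lamv v)^2 *\<^sub>R outer v v"
  shows "S = mat 1 + cL v *\<^sub>R outer v v"
proof -
  let ?l = "lamv v" let ?s = "v \<bullet> v"
  note lf = lam_facts[OF s1]
  have SS: "S *v (S *v x) = x + (?l^2 * (v \<bullet> x)) *\<^sub>R v" for x
    unfolding matrix_vector_mul_assoc sq IPmv ..
  have inj: "z = 0" if "S *v z + z = 0" for z
  proof (rule ccontr)
    assume "z \<noteq> 0"
    then have "z \<bullet> (S *v z) > 0" using pd by (simp add: pos_def_mat_def)
    moreover have "S *v z = - z" using that by (simp add: eq_neg_iff_add_eq_0)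
    ultimately show False using inner_ge_zero[of z] by simp
  qed
  have fixp: "S *v z = z" if "S *v (S *v z) = z" for z
  proof -
    have "S *v (S *v z - z) + (S *v z - z) = 0" by (simp only: Smv_lin that) simp
    then have "S *v z - z = 0" by (rule inj)
    then show ?thesis by simp
  qed
  show ?thesis
  proof (cases "?s = 0")
    case True
    then have v0: "v = 0" by simp
    have "S *v x = (mat 1 + cL v *\<^sub>R outer v v) *v x" for x
      using fixp[of x] SS[of x] v0 by (simp add: IPmv)
    then show ?thesis by (simp add: matrix_eq)
  next
    case False
    have vnz: "v \<noteq> 0" using False by auto
    define al where "al = (v \<bullet> (S *v v)) / ?s"
    have "S *v (S *v (S *v v)) = S *v v + (?l^2 * (v \<bullet> (S *v v))) *\<^sub>R v" by (rule SS)
    moreover have "S *v (S *v (S *v v)) = S *v v + (?l^2 * ?s) *\<^sub>R (S *v v)"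
      using SS[of v] by (simp add: Smv_lin)
    ultimately have "(?l^2 * ?s) *\<^sub>R (S *v v) = (?l^2 * (v \<bullet> (S *v v))) *\<^sub>R v" by simp
    note eq = this
    have ne: "?l^2 * ?s \<noteq> 0" using False lf(1) by simp
    have "S *v v = inverse (?l^2 * ?s) *\<^sub>R ((?l^2 * ?s) *\<^sub>R (S *v v))"
      by (simp only: scaleR_scaleR left_inverse[OF ne] scaleR_one)
    also have "\<dots> = inverse (?l^2 * ?s) *\<^sub>R ((?l^2 * (v \<bullet> (S *v v))) *\<^sub>R v)" by (simp only: eq)
    also have "\<dots> = al *\<^sub>R v" using ne by (simp add: al_def field_simps)
    finally have Sv: "S *v v = al *\<^sub>R v" .
    have alp: "al > 0" using pd vnz False by (simp add: pos_def_mat_def al_def)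
    have A1: "S *v (S *v v) = (al * al) *\<^sub>R v" by (simp add: Sv Smv_lin)
    have A2: "S *v (S *v v) = ?l^2 *\<^sub>R v"
    proof -
      have "S *v (S *v v) = (1 + ?l^2 * ?s) *\<^sub>R v" using SS[of v] by (simp add: scaleR_add_left)
      then show ?thesis by (simp only: lf(4)[symmetric])
    qed
    have "(al * al) *\<^sub>R v = ?l^2 *\<^sub>R v" using A1 A2 by (simp only:)
    then have "al^2 = ?l^2" using vnz by (simp add: scaleR_cancel_right power2_eq_square)
    then have al: "al = ?l" by (rule power2_eq_imp_eq) (use alp lf(1) in auto)
    show ?thesis unfolding matrix_eq
    proof
      fix x
      define z where "z = x - ((v \<bullet> x) / ?s) *\<^sub>R v"
      have vz: "v \<bullet> z = 0" using False by (simp add: z_def inner_diff_right)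
      have Sz: "S *v z = z" using fixp[of z] SS[of z] vz by simp
      have xz: "x = z + ((v \<bullet> x) / ?s) *\<^sub>R v" by (simp add: z_def)
      have "S *v x = S *v (z + ((v \<bullet> x) / ?s) *\<^sub>R v)" using xz by (rule arg_cong)
      also have "\<dots> = S *v z + ((v \<bullet> x) / ?s) *\<^sub>R (S *v v)"
        by (simp only: Smv_lin)
      also have "\<dots> = z + ((v \<bullet> x) / ?s) *\<^sub>R (?l *\<^sub>R v)" by (simp only: Sz Sv al)
      also have "\<dots> = x + ((v \<bullet> x) / ?s * ?l - (v \<bullet> x) / ?s) *\<^sub>R v"
        by (simp add: z_def scaleR_diff_left)
      also have "(v \<bullet> x) / ?s * ?l - (v \<bullet> x) / ?s = cL v * (v \<bullet> x)"
        using False by (simp add: cL_def field_simps)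
      finally show "S *v x = (mat 1 + cL v *\<^sub>R outer v v) *v x" by (simp add: IPmv)
    qed
  qed
qed



lemma outer0: "v \<bullet> v = 0 \<Longrightarrow> outer v v = 0"
  by (simp add: outer_def vec_eq_iff)

lemma inv_I_minus:
  assumes "v \<bullet> v < 1"
  shows "matrix_inv (mat 1 - outer v v) = mat 1 + (lamv v)^2 *\<^sub>R outer v v"
proof -
  have c: "-1 + (lamv v)^2 + -1 * (lamv v)^2 * (v \<bullet> v) = 0" using lam_facts(2)[OF assms]
    by (simp add: algebra_simps)
  have c2: "(lamv v)^2 + -1 + (lamv v)^2 * -1 * (v \<bullet> v) = 0" using c by (simp add: algebra_simps)
  show ?thesis unfolding IP_minus by (rule matrix_inv_eq) (simp_all only: IP_mult c c2, simp_all)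
qed

lemma transpose_IP: "transpose (mat 1 + a *\<^sub>R outer v v) = mat 1 + a *\<^sub>R outer v v"
  by (simp add: vec_eq_iff transpose_def outer_def mat_def mult.commute)

lemma cL_nonneg: "v \<bullet> v < 1 \<Longrightarrow> cL v \<ge> 0"
  using lam_facts(3)[of v] by (simp add: cL_def)

lemma L_is:
  assumes s1: "v \<bullet> v < 1"
  shows "inv_sqrt_mat (mat 1 - outer v v) = mat 1 + cL v *\<^sub>R outer v v"
  unfolding inv_sqrt_mat_def inv_I_minus[OF s1]
proof (rule the_equality)
  show "transpose (mat 1 + cL v *\<^sub>R outer v v) = mat 1 + cL v *\<^sub>R outer v v \<and>
    pos_def_mat (mat 1 + cL v *\<^sub>R outer v v) \<and>
    (mat 1 + cL v *\<^sub>R outer v v) ** (mat 1 + cL v *\<^sub>R outer v v) = mat 1 + (lamv v)\<^sup>2 *\<^sub>R outer v v"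
  proof (intro conjI)
    show "pos_def_mat (mat 1 + cL v *\<^sub>R outer v v)" unfolding pos_def_mat_def
    proof (intro allI impI)
      fix x :: "real^'a" assume "x \<noteq> 0"
      then have "x \<bullet> x > 0" by simp
      moreover have "cL v * (v \<bullet> x) * (v \<bullet> x) \<ge> 0" 
        using mult_nonneg_nonneg[OF cL_nonneg[OF s1] zero_le_square[of "v \<bullet> x"]] by (simp add: mult.assoc)
      moreover have "x \<bullet> ((mat 1 + cL v *\<^sub>R outer v v) *v x) = x \<bullet> x + cL v * (v \<bullet> x) * (v \<bullet> x)"
        by (simp add: IPmv inner_add_right inner_commute[of x v])
      ultimately show "x \<bullet> ((mat 1 + cL v *\<^sub>R outer v v) *v x) > 0" by linarith
    qed
  qed (simp_all add: transpose_IP L0_sq[OF s1])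
qed (use uniq_sqrt[OF s1] in blast)

lemma Linv_is:
  assumes s1: "v \<bullet> v < 1"
  shows "matrix_inv (mat 1 + cL v *\<^sub>R outer v v) = mat 1 + dL v *\<^sub>R outer v v"
proof (cases "v \<bullet> v = 0")
  case True then show ?thesis by (simp add: outer0 matrix_inv_eq)
next
  case False
  have l0: "lamv v > 0" using lam_facts[OF s1] by simp
  have "(cL v + dL v + cL v * dL v * (v \<bullet> v)) * (v \<bullet> v)
      = (v \<bullet> v * cL v) + (v \<bullet> v * dL v) + (v \<bullet> v * cL v) * (v \<bullet> v * dL v)"
    by (simp add: algebra_simps)
  also have "\<dots> = 0" unfolding cL_s[OF False] dL_s[OF False] using l0
    by (simp add: field_simps)
  finally have z: "cL v + dL v + cL v * dL v * (v \<bullet> v) = 0" using False by simp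
  have z2: "dL v + cL v + dL v * cL v * (v \<bullet> v) = 0" using z by (simp add: algebra_simps)
  show ?thesis by (rule matrix_inv_eq) (simp_all only: IP_mult z z2, simp_all)
qed

lemma L_v: "(mat 1 + cL v *\<^sub>R outer v v) *v v = lamv v *\<^sub>R v"
proof (cases "v \<bullet> v = 0")
  case True then show ?thesis by simp
next
  case False
  have "(mat 1 + cL v *\<^sub>R outer v v) *v v = v + (cL v * (v \<bullet> v)) *\<^sub>R v" by (rule IPmv)
  also have "cL v * (v \<bullet> v) = lamv v - 1" using cL_s[OF False] by (simp add: mult.commute)
  finally show ?thesis by (simp add: scaleR_diff_left)
qed

lemma Li_v: "(mat 1 + dL v *\<^sub>R outer v v) *v v = (1 / lamv v) *\<^sub>R v"
proof (cases "v \<bullet> v = 0")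
  case True then show ?thesis by simp
next
  case False
  have "(mat 1 + dL v *\<^sub>R outer v v) *v v = v + (dL v * (v \<bullet> v)) *\<^sub>R v" by (rule IPmv)
  also have "dL v * (v \<bullet> v) = 1 / lamv v - 1" using dL_s[OF False] by (simp add: mult.commute)
  finally show ?thesis by (simp add: scaleR_diff_left)
qed

lemma L_minus_Li:
  assumes s1: "v \<bullet> v < 1"
  shows "(mat 1 + cL v *\<^sub>R outer v v) *v y - (mat 1 + dL v *\<^sub>R outer v v) *v y
       = (lamv v * (v \<bullet> y)) *\<^sub>R v"
proof (cases "v \<bullet> v = 0")
  case True then show ?thesis by (simp add: outer0)
next
  case False
  note lf = lam_facts[OF s1]
  have "(cL v - dL v) * (v \<bullet> v) = lamv v * (v \<bullet> v)"
  proof -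
    have "(cL v - dL v) * (v \<bullet> v) = lamv v - 1 / lamv v"
      using cL_s[OF False] dL_s[OF False] by (simp add: algebra_simps)
    also have "\<dots> = (lamv v ^ 2 - 1) / lamv v" using lf(1) by (simp add: field_simps power2_eq_square)
    also have "\<dots> = lamv v * (v \<bullet> v)" using lf(1) lf(4) by (simp add: field_simps power2_eq_square)
    finally show ?thesis .
  qed
  then have "cL v - dL v = lamv v" using False by simp
  then show ?thesis by (simp add: IPmv algebra_simps smat_mv outer_mv inner_commute flip: scaleR_diff_left)
qed



lemma te: "x \<bullet> (transpose A *v z) = ((A::real^'n^'n) *v x) \<bullet> z"
  by (metis dot_lmul_matrix vector_transpose_matrix)

lemma core:
  fixes e m :: "real^'n^'n" and v :: "real^'n" and k :: int
  assumes ie: "invertible e" and im: "invertible m" and s1: "v \<bullet> v < 1"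
  and d1: "lam = 1 / sqrt (1 - v \<bullet> v)"
  and d2: "Lh = inv_sqrt_mat (mat 1 - outer v v)"
  and d3: "gam = transpose e ** e" and d4: "phi = transpose m ** m"
  and d5: "n = matrix_inv e *v v" and d6: "nt = matrix_inv m *v v"
  and d7: "Dt = matrix_inv e ** matrix_inv Lh ** m" and d8: "B = matrix_inv e ** Lh ** m"
  and d9: "U = (1 / lam) *\<^sub>R Ymat (k - 1) B" and d10: "Ut = Dt ** Ymat (k - 1) Dt"
  and d11: "W = B ** Ymat (k - 1) Dt"
  and d12: "V = esym k Dt" and d13: "rho = - esym k B" and d14: "j = - (gam ** W *v n)"
  shows "rho + V = j \<bullet> n
      \<and> esym k B - esym k Dt = n \<bullet> (gam ** W *v n)
      \<and> U *v n = Ut *v nt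
      \<and> n \<bullet> (gam ** W *v n) = lam\<^sup>2 * (nt \<bullet> (phi ** Ut *v nt))"
proof -
  define L where "L = mat 1 + cL v *\<^sub>R outer v v"
  define Li where "Li = mat 1 + dL v *\<^sub>R outer v v"
  define Ei where "Ei = matrix_inv e"
  define Mi where "Mi = matrix_inv m"
  define Y where "Y = Ymat (k - 1) Dt"
  define w where "w = transpose m *v v"
  have lam: "lam = lamv v" by (simp add: d1 lamv_def)
  have lpos: "lam > 0" using lam_facts(1)[OF s1] lam by simp
  have Lh: "Lh = L" unfolding d2 L_def by (rule L_is[OF s1])
  have iLh: "matrix_inv Lh = Li" unfolding Lh L_def Li_def by (rule Linv_is[OF s1])
  have eEi: "e ** Ei = mat 1" and Eie: "Ei ** e = mat 1" using matrix_inv_props[OF ie] by (simp_all add: Ei_def)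
  have mMi: "m ** Mi = mat 1" and Mim: "Mi ** m = mat 1" using matrix_inv_props[OF im] by (simp_all add: Mi_def)
  have Bx: "B *v x = Ei *v (L *v (m *v x))" for x
    by (simp add: d8 Lh Ei_def matrix_vector_mul_assoc matrix_mul_assoc)
  have Dtx: "Dt *v x = Ei *v (Li *v (m *v x))" for x
    by (simp add: d7 iLh Ei_def matrix_vector_mul_assoc matrix_mul_assoc)
  have wx: "w \<bullet> x = v \<bullet> (m *v x)" for x
    by (simp add: w_def dot_lmul_matrix)
  have F1: "B = Dt + outer (lam *\<^sub>R n) w"
    unfolding matrix_eq
  proof
    fix x
    have "B *v x - Dt *v x = Ei *v (L *v (m *v x) - Li *v (m *v x))"
      by (simp add: Bx Dtx matrix_vector_mult_diff_distrib)
    also have "\<dots> = (lam * (v \<bullet> (m *v x))) *\<^sub>R n"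
      unfolding L_def Li_def L_minus_Li[OF s1] by (simp add: lam d5 Ei_def matrix_vector_mult_scaleR)
    also have "\<dots> = outer (lam *\<^sub>R n) w *v x" by (simp add: outer_mv wx)
    finally show "B *v x = (Dt + outer (lam *\<^sub>R n) w) *v x"
      by (simp add: matrix_vector_mult_add_rdistrib algebra_simps)
  qed
  have ev: "e *v n = v" by (simp add: d5 matrix_vector_mul_assoc eEi[unfolded Ei_def])
  have eE: "e *v (Ei *v y) = y" for y by (simp add: matrix_vector_mul_assoc eEi)
  have eB: "e *v (B *v z) = L *v (m *v z)" for z
    by (simp only: Bx eE)
  have Lsym: "v \<bullet> (L *v q) = lam * (v \<bullet> q)" for q
  proof -
    have "v \<bullet> (L *v q) = (L *v v) \<bullet> q" using sym_mv[of L v q] by (simp add: L_def transpose_IP)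
    also have "\<dots> = lam * (v \<bullet> q)" by (simp add: L_def L_v lam)
    finally show ?thesis .
  qed
  have F3: "n \<bullet> (gam ** W *v n) = lam * (v \<bullet> (m *v (Y *v n)))"
  proof -
    have "gam ** W *v n = transpose e *v (e *v (B *v (Y *v n)))"
      by (simp add: d3 d11 Y_def matrix_vector_mul_assoc matrix_mul_assoc)
    then have "n \<bullet> (gam ** W *v n) = v \<bullet> (L *v (m *v (Y *v n)))" by (simp only: te ev eB)
    then show ?thesis by (simp add: Lsym)
  qed
  have F2: "esym k B - esym k Dt = lam * (v \<bullet> (m *v (Y *v n)))"
  proof -
    have "esym k B = esym k Dt + w \<bullet> (Y *v (lam *\<^sub>R n))"
      unfolding F1 Y_def by (rule esym_rank1)
    then show ?thesis by (simp add: wx matrix_vector_mult_scaleR)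
  qed
  have c1: "rho + V = j \<bullet> n" using F2 F3 by (simp add: d12 d13 d14 inner_commute)
  have c2: "esym k B - esym k Dt = n \<bullet> (gam ** W *v n)" using F2 F3 by simp
  have YB: "Ymat (k - 1) B *v n = Y *v n"
  proof -
    have "Ymat (k - 1) B *v (lam *\<^sub>R n) = Y *v (lam *\<^sub>R n)"
      unfolding F1 Y_def by (rule Y_rank1)
    then have "lam *\<^sub>R (Ymat (k - 1) B *v n) = lam *\<^sub>R (Y *v n)"
      by (simp add: matrix_vector_mult_scaleR)
    then show ?thesis using lpos by simp
  qed
  have Dtnt: "Dt *v nt = (1 / lam) *\<^sub>R n"
  proof -
    have "m *v nt = v" by (simp add: d6 matrix_vector_mul_assoc mMi[unfolded Mi_def])
    then show ?thesis by (simp add: Dtx Li_def Li_v lam d5 Ei_def matrix_vector_mult_scaleR)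
  qed
  have Utnt: "Ut *v nt = (1 / lam) *\<^sub>R (Y *v n)"
  proof -
    have "Ut *v nt = (Y ** Dt) *v nt" by (simp add: d10 Y_def Ymat_comm)
    also have "\<dots> = Y *v (Dt *v nt)" by (simp add: matrix_vector_mul_assoc)
    finally show ?thesis by (simp add: Dtnt matrix_vector_mult_scaleR)
  qed
  have c3: "U *v n = Ut *v nt"
    by (simp add: d9 Utnt smat_mv YB)
  have c4: "n \<bullet> (gam ** W *v n) = lam\<^sup>2 * (nt \<bullet> (phi ** Ut *v nt))"
  proof -
    have mnt: "m *v nt = v" by (simp add: d6 matrix_vector_mul_assoc mMi[unfolded Mi_def])
    have "phi ** Ut *v nt = transpose m *v (m *v (Ut *v nt))"
      by (simp add: d4 matrix_vector_mul_assoc matrix_mul_assoc)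
    then have "nt \<bullet> (phi ** Ut *v nt) = v \<bullet> (m *v (Ut *v nt))" by (simp only: te mnt)
    also have "\<dots> = (1 / lam) * (v \<bullet> (m *v (Y *v n)))"
      by (simp add: Utnt matrix_vector_mult_scaleR)
    finally have "lam\<^sup>2 * (nt \<bullet> (phi ** Ut *v nt)) = lam * (v \<bullet> (m *v (Y *v n)))"
      using lpos by (simp add: power2_eq_square)
    then show ?thesis using F3 by simp
  qed
  show ?thesis using c1 c2 c3 c4 by blast
qed

theorem mainTheorem3:
  fixes e m :: "real^'n^'n" and v :: "real^'n" and k :: int
  assumes "invertible e" and "invertible m"
    and "v \<bullet> v < 1"
    and "transpose (transpose e ** inv_sqrt_mat (mat 1 - outer v v) ** m)
         = transpose e ** inv_sqrt_mat (mat 1 - outer v v) ** m"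
  shows
    "let lam = 1 / sqrt (1 - v \<bullet> v);
         Lh = inv_sqrt_mat (mat 1 - outer v v);
         gam = transpose e ** e;
         phi = transpose m ** m;
         n = matrix_inv e *v v;
         nt = matrix_inv m *v v;
         Dt = matrix_inv e ** matrix_inv Lh ** m;
         B = matrix_inv e ** Lh ** m;
         U = (1 / lam) *\<^sub>R Ymat (k - 1) B;
         Ut = Dt ** Ymat (k - 1) Dt;
         W = B ** Ymat (k - 1) Dt;
         V = esym k Dt;
         rho = - esym k B;
         j = - (gam ** W *v n)
     in rho + V = j \<bullet> n
      \<and> esym k B - esym k Dt = n \<bullet> (gam ** W *v n)
      \<and> U *v n = Ut *v nt
      \<and> n \<bullet> (gam ** W *v n) = lam\<^sup>2 * (nt \<bullet> (phi ** Ut *v nt))"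
  unfolding Let_def
  by (rule core[OF assms(1,2,3)]) (rule refl)+


end
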